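(* Suppose the family of update functions $\mathrm{Upd}$ satisfies P1, P3 and P4. Let $\mathcal{M}=(W,\mathcal{F})$ be a measure space, $\Pr\in\Delta_{\mathcal{M}}$, and $A\subseteq B$ with $A,B\in\mathcal{F}$. If $\Pr(A|B)=1$ (respectively $\Pr(A|B)=0$), then $\Pr'(A)=1$ (respectively $\Pr'(A)=0$) for all $\Pr'\in\mathrm{Upd}^{\mathcal{M}}(\Pr,B)$.
   Context: A measure space is a pair $\mathcal{M}=(W,\mathcal{F})$ with $\mathcal{F}$ an algebra of subsets of $W$; $\Delta_{\mathcal{M}}$ is the set of all probability measures on $\mathcal{M}$. An update function on $\mathcal{M}$ is a map $\mathrm{Upd}^{\mathcal{M}}:2^{\Delta_{\mathcal{M}}}\times\mathcal{F}\to 2^{\Delta_{\mathcal{M}}}$ such that $\mathrm{Upd}^{\mathcal{M}}(X,B)=\emptyset$ whenever $\Pr(B)=0$ for all $\Pr\in X$; $\mathrm{Upd}^{\mathcal{M}}(\Pr,B)$ means $\mathrm{Upd}^{\mathcal{M}}(\{\Pr\},B)$. A family $\mathrm{Upd}=\{\mathrm{Upd}^{\mathcal{M}}\}$ has one update function for each measure space. $\Pr(A|B)=\Pr(A\cap B)/\Pr(B)$. Postulates (for all $\mathcal{M}=(W,\mathcal{F})$, $X\subseteq\Delta_{\mathcal{M}}$, $B,C\in\mathcal{F}$): P1: $\mathrm{Upd}^{\mathcal{M}}(X,B)\subseteq\{\Pr\in\Delta_{\mathcal{M}}:\Pr(B)=1\}$. P3: $\mathrm{Upd}^{\mathcal{M}}(\mathrm{Upd}^{\mathcal{M}}(X,B),C)=\mathrm{Upd}^{\mathcal{M}}(X,B\cap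 C)$. P4: $\mathrm{Upd}^{\mathcal{M}}(X,B)=X$ if $\Pr(B)=1$ for all $\Pr\in X$. *)

theory Defs
  imports "HOL-Analysis.Analysis"
begin

text \<open>A measure space is a pair (W, F) with F an algebra of subsets of W (library locale algebra).
  A probability measure on it is a finitely additive function F to [0,1] with P W = 1;
  to make equality of measures meaningful it is normalised to 0 outside F.\<close>

definition prob_measure_on :: "'a set \<Rightarrow> 'a set set \<Rightarrow> ('a set \<Rightarrow> real) \<Rightarrow> bool" where
  "prob_measure_on W F P \<longleftrightarrow>
     (\<forall>S\<in>F. 0 \<le> P S) \<and> P W = 1 \<and>
     (\<forall>S T. S \<in> F \<longrightarrow> T \<in> F \<longrightarrow> S \<inter> T = {} \<longrightarrow> P (S \<union> T) = P S + P T) \<and>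
     (\<forall>S. S \<notin> F \<longrightarrow> P S = 0)"

definition Delta :: "'a set \<Rightarrow> 'a set set \<Rightarrow> ('a set \<Rightarrow> real) set" where
  "Delta W F = {P. prob_measure_on W F P}"

definition cond_prob :: "('a set \<Rightarrow> real) \<Rightarrow> 'a set \<Rightarrow> 'a set \<Rightarrow> real" where
  "cond_prob P A B = P (A \<inter> B) / P B"

type_synonym 'a upd_fun = "('a set \<Rightarrow> real) set \<Rightarrow> 'a set \<Rightarrow> ('a set \<Rightarrow> real) set"

definition update_fun :: "'a set \<Rightarrow> 'a set set \<Rightarrow> 'a upd_fun \<Rightarrow> bool" where
  "update_fun W F U \<longleftrightarrow>
     (\<forall>X B. X \<subseteq> Delta W F \<longrightarrow> B \<in> F \<longrightarrow>
        U X B \<subseteq> Delta W F \<and> ((\<forall>P\<in>X. P B = 0) \<longrightarrow> U X B = {}))"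

type_synonym 'a upd_family = "'a set \<Rightarrow> 'a set set \<Rightarrow> 'a upd_fun"

definition upd_family :: "'a upd_family \<Rightarrow> bool" where
  "upd_family Upd \<longleftrightarrow> (\<forall>W F. algebra W F \<longrightarrow> update_fun W F (Upd W F))"

definition P1 :: "'a upd_family \<Rightarrow> bool" where
  "P1 Upd \<longleftrightarrow> (\<forall>W F X B. algebra W F \<longrightarrow> X \<subseteq> Delta W F \<longrightarrow> B \<in> F \<longrightarrow>
      Upd W F X B \<subseteq> {P \<in> Delta W F. P B = 1})"

definition P3 :: "'a upd_family \<Rightarrow> bool" where
  "P3 Upd \<longleftrightarrow> (\<forall>W F X B C. algebra W F \<longrightarrow> X \<subseteq> Delta W F \<longrightarrow> B \<in> F \<longrightarrow> C \<in> F \<longrightarrow>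
      Upd W F (Upd W F X B) C = Upd W F X (B \<inter> C))"

definition P4 :: "'a upd_family \<Rightarrow> bool" where
  "P4 Upd \<longleftrightarrow> (\<forall>W F X B. algebra W F \<longrightarrow> X \<subseteq> Delta W F \<longrightarrow> B \<in> F \<longrightarrow>
      (\<forall>P\<in>X. P B = 1) \<longrightarrow> Upd W F X B = X)"

end

theory Submission
  imports Defs
begin

lemma pm_add: "prob_measure_on W F P \<Longrightarrow> S \<in> F \<Longrightarrow> T \<in> F \<Longrightarrow> S \<inter> T = {} \<Longrightarrow> P (S \<union> T) = P S + P T"
  unfolding prob_measure_on_def by blast

theorem lemma4p6:
  fixes Upd :: "'a upd_family" and W :: "'a set" and F :: "'a set set"
    and P :: "'a set \<Rightarrow> real" and A B :: "'a set"
  assumes "upd_family Upd" and "P1 Upd" and "P3 Upd" and "P4 Upd"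
    and "algebra W F" and "P \<in> Delta W F"
    and "A \<in> F" and "B \<in> F" and "A \<subseteq> B"
  shows "(cond_prob P A B = 1 \<longrightarrow> (\<forall>P' \<in> Upd W F {P} B. P' A = 1)) \<and>
         (cond_prob P A B = 0 \<longrightarrow> (\<forall>P' \<in> Upd W F {P} B. P' A = 0))"
proof -
  have alg: "algebra W F" by fact
  have pm: "prob_measure_on W F P" using assms(6) by (simp add: Delta_def)
  interpret algebra W F by (rule alg)
  have FW: "\<And>S. S \<in> F \<Longrightarrow> S \<subseteq> W" using sets_into_space by blast
  have diff: "\<And>S T. S \<in> F \<Longrightarrow> T \<in> F \<Longrightarrow> S - T \<in> F" by blast
  have WF: "W \<in> F" using top by blast
  have XD: "{P} \<subseteq> Delta W F" using assms(6) by simp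
  have key: "Upd W F {P} B = Upd W F {P} (B - N)" if N: "N \<in> F" "P N = 0" for N
  proof -
    have c: "W - N \<in> F" using diff WF N by blast
    have "P W = P (W - N) + P N" using pm_add[OF pm c N(1)] FW[OF N(1)]
      by (metis Diff_disjoint Diff_partition Int_commute Un_commute)
    moreover have "P W = 1" using pm by (simp add: prob_measure_on_def)
    ultimately have "P (W - N) = 1" using N by simp
    hence "Upd W F {P} (W - N) = {P}" using assms(4) alg XD c unfolding P4_def by blast
    hence "Upd W F {P} B = Upd W F (Upd W F {P} (W - N)) B" by simp
    also have "\<dots> = Upd W F {P} ((W - N) \<inter> B)"
      using assms(3) alg XD c assms(8) unfolding P3_def by blast
    also have "(W - N) \<inter> B = B - N" using FW[OF assms(8)] by blast
    finally show ?thesis .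
  qed
  have p1: "\<And>S Q. S \<in> F \<Longrightarrow> Q \<in> Upd W F {P} S \<Longrightarrow> Q \<in> Delta W F \<and> Q S = 1"
    using assms(2) alg XD unfolding P1_def by blast
  have AB: "A \<inter> B = A" using assms(9) by blast
  have BA: "B - A \<in> F" using diff assms(7,8) by blast
  have PB: "P B = P A + P (B - A)" using pm_add[OF pm assms(7) BA] assms(9)
    by (metis Diff_disjoint Diff_partition)
  show ?thesis
  proof (intro conjI impI ballI)
    fix Q assume c: "cond_prob P A B = 1" and Q: "Q \<in> Upd W F {P} B"
    hence "P B \<noteq> 0" by (auto simp: cond_prob_def)
    hence "P A = P B" using c AB by (simp add: cond_prob_def)
    hence "P (B - A) = 0" using PB by simp
    from key[OF BA this] Q have "Q \<in> Upd W F {P} (B - (B - A))" by simp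
    moreover have "B - (B - A) = A" using assms(9) by blast
    ultimately show "Q A = 1" using p1 assms(7) by auto
  next
    fix Q assume c: "cond_prob P A B = 0" and Q: "Q \<in> Upd W F {P} B"
    show "Q A = 0"
    proof (cases "P B = 0")
      case True
      have "Upd W F {P} B = {}" using assms(1) alg XD assms(8) True
        unfolding upd_family_def update_fun_def by blast
      with Q show ?thesis by simp
    next
      case False
      hence "P A = 0" using c AB by (simp add: cond_prob_def)
      from key[OF assms(7) this] Q have Q2: "Q \<in> Upd W F {P} (B - A)" by simp
      from p1[OF BA Q2] have qd: "Q \<in> Delta W F" and q1: "Q (B - A) = 1" by auto
      have qm: "prob_measure_on W F Q" using qd by (simp add: Delta_def)
      have "Q B = Q A + Q (B - A)" using pm_add[OF qm assms(7) BA] assms(9)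
        by (metis Diff_disjoint Diff_partition)
      moreover have "Q W = Q B + Q (W - B)"
        using pm_add[OF qm assms(8) diff[OF WF assms(8)]] FW[OF assms(8)]
        by (metis Diff_disjoint Diff_partition)
      moreover have "Q W = 1" "0 \<le> Q (W - B)" "0 \<le> Q A"
        using qm diff[OF WF assms(8)] assms(7) by (auto simp: prob_measure_on_def)
      ultimately show ?thesis using q1 by linarith
    qed
  qed
qed

end
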